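(* Let $R\in\operatorname{Ob}(\hat{\mathcal C})$, $n\ge2$, $G=\mathrm{SL}_n(R)$, $\bar\rho:G\to\mathrm{GL}_n(k)$ induced by reduction, $\iota:G\hookrightarrow\mathrm{GL}_n(R)$ the inclusion, and let $S\in\operatorname{Ob}(\hat{\mathcal C})$. (i) The map $\iota_*(S):\mathrm{Hom}_{\hat{\mathcal C}}(R,S)\to\mathrm{Def}_{\bar\rho}(S)$, $f\mapsto[\mathrm{GL}_n(f)\circ\iota]$, is injective. (ii) For $\xi\in\mathrm{Def}_{\bar\rho}(S)$, we have $\xi\in\operatorname{im}\iota_*(S)$ if and only if there is a lift $\rho\in\xi$ such that for every pair $a\ne b$ in $\{1,\dots,n\}$ and every $r\in R$ there exists $c^r_{ab}\in S$ with $\rho(t^r_{ab})=t^{c^r_{ab}}_{ab}$.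
   Context: Let $k$ be a finite field. $\hat{\mathcal C}$ is the category of complete noetherian local commutative rings with residue field $k$, with local homomorphisms inducing the identity on $k$; $\mathfrak m_S$ is the maximal ideal of $S$. For a profinite group $G$ and continuous $\bar\rho:G\to\mathrm{GL}_n(k)$, a lift to $S$ is a continuous $\rho:G\to\mathrm{GL}_n(S)$ reducing to $\bar\rho$; lifts are strictly equivalent if conjugate by an element of $I+M_n(\mathfrak m_S)$; $\mathrm{Def}_{\bar\rho}(S)$ is the set of strict equivalence classes $[\rho]$. $\mathrm{GL}_n(f)$ applies $f$ entrywise. For a commutative ring $A$, $r\in A$ and $a\ne b$, $e_{ab}$ is the matrix unit with $1$ in position $(a,b)$ and $t^r_{ab}=I+re_{ab}$. *)

theory Defs
  imports "HOL-Analysis.Analysis"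
begin

definition is_ideal :: "'r::comm_ring_1 set \<Rightarrow> bool" where
  "is_ideal I \<longleftrightarrow> 0 \<in> I \<and> (\<forall>x\<in>I. \<forall>y\<in>I. x + y \<in> I) \<and> (\<forall>r. \<forall>x\<in>I. r * x \<in> I)"

definition gen_ideal :: "'r::comm_ring_1 set \<Rightarrow> 'r set" where
  "gen_ideal X = \<Inter>{I. is_ideal I \<and> X \<subseteq> I}"

definition maxid :: "('r::comm_ring_1 \<Rightarrow> 'k::field) \<Rightarrow> 'r set" where
  "maxid \<pi> = {x. \<pi> x = 0}"

fun mpow :: "('r::comm_ring_1 \<Rightarrow> 'k::field) \<Rightarrow> nat \<Rightarrow> 'r set" where
  "mpow \<pi> 0 = UNIV"
| "mpow \<pi> (Suc i) = gen_ideal {a * b |a b. a \<in> maxid \<pi> \<and> b \<in> mpow \<pi> i}"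

definition is_ring_hom :: "('a::comm_ring_1 \<Rightarrow> 'b::comm_ring_1) \<Rightarrow> bool" where
  "is_ring_hom f \<longleftrightarrow> f 1 = 1 \<and> (\<forall>x y. f (x + y) = f x + f y) \<and> (\<forall>x y. f (x * y) = f x * f y)"

text \<open>An object of C-hat: a complete noetherian local ring together with an identification
  of its residue field with k, given by a surjective ring map pi onto k whose kernel is the
  unique maximal ideal.\<close>
definition cobj :: "('r::comm_ring_1 \<Rightarrow> 'k::{field,finite}) \<Rightarrow> bool" where
  "cobj \<pi> \<longleftrightarrow>
     is_ring_hom \<pi> \<and> surj \<pi> \<and>
     \<comment> \<open>local with maximal ideal ker pi: everything outside ker pi is a unit\<close>
     (\<forall>x. \<pi> x \<noteq> 0 \<longrightarrow> (\<exists>y. x * y = 1)) \<and>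
     \<comment> \<open>noetherian: every ideal is finitely generated\<close>
     (\<forall>I::'r set. is_ideal I \<longrightarrow> (\<exists>F. finite F \<and> I = gen_ideal F)) \<and>
     \<comment> \<open>m-adically separated\<close>
     (\<Inter>i. mpow \<pi> i) = {0} \<and>
     \<comment> \<open>m-adically complete\<close>
     (\<forall>x::nat \<Rightarrow> 'r. (\<forall>i. \<exists>N. \<forall>p\<ge>N. \<forall>q\<ge>N. x p - x q \<in> mpow \<pi> i) \<longrightarrow>
        (\<exists>L. \<forall>i. \<exists>N. \<forall>p\<ge>N. x p - L \<in> mpow \<pi> i))"

definition homC :: "('r::comm_ring_1 \<Rightarrow> 'k::{field,finite}) \<Rightarrow> ('s::comm_ring_1 \<Rightarrow> 'k)
    \<Rightarrow> ('r \<Rightarrow> 's) set" where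
  "homC \<pi>R \<pi>S = {f. is_ring_hom f \<and> (\<forall>x. x \<in> maxid \<pi>R \<longrightarrow> f x \<in> maxid \<pi>S) \<and>
                     (\<forall>x. \<pi>S (f x) = \<pi>R x)}"

definition matmap :: "('a \<Rightarrow> 'b) \<Rightarrow> 'a^'n^'n \<Rightarrow> 'b^'n^'n" where
  "matmap f A = (\<chi> i j. f (A $ i $ j))"

definition SL :: "('r::comm_ring_1^'n^'n) set" where
  "SL = {g. det g = 1}"

definition is_GL :: "'s::comm_ring_1^'n^'n \<Rightarrow> bool" where
  "is_GL A \<longleftrightarrow> (\<exists>B. A ** B = mat 1 \<and> B ** A = mat 1)"

definition elt :: "'a::comm_ring_1 \<Rightarrow> 'n \<Rightarrow> 'n \<Rightarrow> 'a^'n^'n" where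
  "elt r a b = mat 1 + (\<chi> i j. if i = a \<and> j = b then r else 0)"

definition matcong :: "('r::comm_ring_1 \<Rightarrow> 'k::field) \<Rightarrow> nat \<Rightarrow> 'r^'n^'n \<Rightarrow> 'r^'n^'n \<Rightarrow> bool" where
  "matcong \<pi> i A B \<longleftrightarrow> (\<forall>a b. A $ a $ b - B $ a $ b \<in> mpow \<pi> i)"

text \<open>A lift to S of the reduction representation of G = SL_n(R): a continuous group
  homomorphism G -> GL_n(S) (both with their m-adic topologies) reducing to rhobar.
  Only values on G matter.\<close>
definition is_lift :: "('r::comm_ring_1 \<Rightarrow> 'k::{field,finite}) \<Rightarrow> ('s::comm_ring_1 \<Rightarrow> 'k)
    \<Rightarrow> ('r^'n^'n \<Rightarrow> 's^'n^'n) \<Rightarrow> bool" where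
  "is_lift \<pi>R \<pi>S \<rho> \<longleftrightarrow>
     (\<forall>g\<in>SL. is_GL (\<rho> g)) \<and>
     (\<forall>g\<in>SL. \<forall>h\<in>SL. \<rho> (g ** h) = \<rho> g ** \<rho> h) \<and>
     (\<forall>g\<in>SL. \<forall>i. \<exists>j. \<forall>h\<in>SL. matcong \<pi>R j g h \<longrightarrow> matcong \<pi>S i (\<rho> g) (\<rho> h)) \<and>
     (\<forall>g\<in>SL. matmap \<pi>S (\<rho> g) = matmap \<pi>R g)"

definition strict_equiv :: "('s::comm_ring_1 \<Rightarrow> 'k::field)
    \<Rightarrow> ('r::comm_ring_1^'n^'n \<Rightarrow> 's^'n^'n) \<Rightarrow> ('r^'n^'n \<Rightarrow> 's^'n^'n) \<Rightarrow> bool" where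
  "strict_equiv \<pi>S \<rho> \<rho>' \<longleftrightarrow>
     (\<exists>P Q. P ** Q = mat 1 \<and> Q ** P = mat 1 \<and> (\<forall>a b. (P - mat 1) $ a $ b \<in> maxid \<pi>S) \<and>
            (\<forall>g\<in>SL. \<rho>' g = P ** \<rho> g ** Q))"

definition Def :: "('r::comm_ring_1 \<Rightarrow> 'k::{field,finite}) \<Rightarrow> ('s::comm_ring_1 \<Rightarrow> 'k)
    \<Rightarrow> ('r^'n^'n \<Rightarrow> 's^'n^'n) set set" where
  "Def \<pi>R \<pi>S = {\<rho>. is_lift \<pi>R \<pi>S \<rho>} // {(\<rho>, \<rho>'). strict_equiv \<pi>S \<rho> \<rho>'}"

definition iota_star :: "('r::comm_ring_1 \<Rightarrow> 'k::{field,finite}) \<Rightarrow> ('s::comm_ring_1 \<Rightarrow> 'k)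
    \<Rightarrow> ('r \<Rightarrow> 's) \<Rightarrow> ('r^'n^'n \<Rightarrow> 's^'n^'n) set" where
  "iota_star \<pi>R \<pi>S f = {\<rho>'. is_lift \<pi>R \<pi>S \<rho>' \<and> strict_equiv \<pi>S (\<lambda>g. matmap f g) \<rho>'}"

end

theory Submission
  imports Defs
begin
lemma elt_entry: "elt s x y $ i $ j = (if i = j then 1 else 0) + (if i = x \<and> j = y then s else 0)"
  by (simp add: elt_def mat_def)

lemma elt_mr: "((M::'a::comm_ring_1^'n^'n) ** elt s x y) $ i $ j = M$i$j + (if j = y then M$i$x * s else 0)"
proof -
  have "((M::'a::comm_ring_1^'n^'n) ** elt s x y) $ i $ j = (\<Sum>k\<in>UNIV. (if k = j then M$i$k else 0) + (if k = x then (if j = y then M$i$k * s else 0) else 0))"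
    unfolding matrix_matrix_mult_def elt_entry by (auto intro!: sum.cong simp: algebra_simps)
  also have "\<dots> = M$i$j + (if j = y then M$i$x * s else 0)"
    by (simp only: sum.distrib sum.delta if_True UNIV_I) simp
  finally show ?thesis .
qed

lemma elt_ml: "(elt s x y ** (M::'a::comm_ring_1^'n^'n)) $ i $ j = M$i$j + (if i = x then s * M$y$j else 0)"
proof -
  have "(elt s x y ** (M::'a::comm_ring_1^'n^'n)) $ i $ j = (\<Sum>k\<in>UNIV. (if k = i then M$k$j else 0) + (if k = y then (if i = x then s * M$k$j else 0) else 0))"
    unfolding matrix_matrix_mult_def elt_entry by (auto intro!: sum.cong simp: algebra_simps)
  also have "\<dots> = M$i$j + (if i = x then s * M$y$j else 0)"
    by (simp only: sum.distrib sum.delta' if_True UNIV_I) simp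
  finally show ?thesis .
qed


lemma elt_add: "x \<noteq> y \<Longrightarrow> elt r x y ** elt s x y = (elt (r+s) x y :: 'a::comm_ring_1^'n^'n)"
  by (auto simp: vec_eq_iff elt_mr elt_entry algebra_simps)

lemma elt_inj: "x \<noteq> y \<Longrightarrow> (elt r x y = (elt s x y :: 'a::comm_ring_1^'n^'n)) = (r = s)"
proof
  assume "x \<noteq> y" "elt r x y = (elt s x y :: 'a::comm_ring_1^'n^'n)"
  then have "elt r x y $ x $ y = (elt s x y :: 'a::comm_ring_1^'n^'n) $ x $ y" by simp
  with \<open>x \<noteq> y\<close> show "r = s" by (simp add: elt_entry)
qed simp

lemma det_elt: "x \<noteq> y \<Longrightarrow> det (elt r x y :: 'a::comm_ring_1^'n^'n) = 1"
proof -
  assume xy: "x \<noteq> y"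
  have "elt r x y = (\<chi> k. if k = x then row x (mat 1) + r *s row y (mat 1) else row k (mat 1 :: 'a^'n^'n))"
    using xy by (auto simp: vec_eq_iff elt_entry row_def mat_def)
  then show ?thesis using det_row_operation[OF xy, of "mat 1" r] by simp
qed

lemma rh_add: "is_ring_hom f \<Longrightarrow> f (x + y) = f x + f y" unfolding is_ring_hom_def by blast
lemma rh_mult: "is_ring_hom f \<Longrightarrow> f (x * y) = f x * f y" unfolding is_ring_hom_def by blast
lemma rh_1: "is_ring_hom f \<Longrightarrow> f 1 = 1" unfolding is_ring_hom_def by blast
lemma rh_0: "is_ring_hom f \<Longrightarrow> f 0 = 0"
proof -
  assume h: "is_ring_hom f"
  from rh_add[OF h, of 0 0] have "f 0 = f 0 + f 0" unfolding add_0_right .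
  then show "f 0 = 0" by (metis add_cancel_left_right)
qed
lemma rh_uminus: "is_ring_hom f \<Longrightarrow> f (- x) = - f x"
proof -
  assume h: "is_ring_hom f"
  have "f x + f (- x) = f (x + - x)" using rh_add[OF h] by (rule sym)
  also have "\<dots> = f 0" by simp
  also have "\<dots> = 0" by (rule rh_0[OF h])
  finally have e: "f x + f (- x) = 0" .
  show ?thesis using minus_unique[OF e] by (rule sym)
qed
lemma rh_diff: "is_ring_hom f \<Longrightarrow> f (x - y) = f x - f y"
proof -
  assume h: "is_ring_hom f"
  have "f (x - y) = f (x + - y)" by simp
  also have "\<dots> = f x + - f y" by (simp only: rh_add[OF h] rh_uminus[OF h])
  also have "\<dots> = f x - f y" by simp
  finally show ?thesis .
qed
lemma rh_sum: "is_ring_hom f \<Longrightarrow> f (sum g A) = (\<Sum>x\<in>A. f (g x))"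
  by (induction A rule: infinite_finite_induct) (auto simp: rh_0 rh_add)
lemma rh_prod: "is_ring_hom f \<Longrightarrow> f (prod g A) = (\<Prod>x\<in>A. f (g x))"
  by (induction A rule: infinite_finite_induct) (auto simp: rh_1 rh_mult)
lemma rh_of_int: "is_ring_hom f \<Longrightarrow> f (of_int z) = of_int z"
proof (induction z rule: int_induct[where k=0])
  case base then show ?case by (simp add: rh_0)
next
  case (step1 i) then show ?case by (simp add: rh_add rh_1)
next
  case (step2 i) then show ?case by (simp add: rh_diff rh_1)
qed

lemma matmap_entry[simp]: "matmap f A $ i $ j = f (A $ i $ j)"
  by (simp add: matmap_def)

lemma matmap_mult: "is_ring_hom f \<Longrightarrow> matmap f (A ** B) = matmap f A ** matmap f B"
  by (simp add: vec_eq_iff matrix_matrix_mult_def rh_sum rh_mult)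

lemma matmap_one: "is_ring_hom f \<Longrightarrow> matmap f (mat 1) = mat 1"
  by (simp add: vec_eq_iff mat_def rh_0 rh_1)

lemma matmap_elt: "is_ring_hom f \<Longrightarrow> matmap f (elt r a b) = elt (f r) a b"
  by (simp add: vec_eq_iff elt_entry rh_0 rh_1 rh_add)

lemma matmap_det: "is_ring_hom f \<Longrightarrow> f (det A) = det (matmap f A)"
  by (simp add: det_def rh_sum rh_mult rh_prod rh_of_int)

lemma matmap_comp: "matmap f (matmap g A) = matmap (f \<circ> g) A"
  by (simp add: vec_eq_iff)

lemma ideal_gen: "is_ideal (gen_ideal X)"
  unfolding is_ideal_def gen_ideal_def by auto

lemma gen_ideal_sub: "X \<subseteq> gen_ideal X"
  unfolding gen_ideal_def by auto

lemma gen_ideal_least: "is_ideal I \<Longrightarrow> X \<subseteq> I \<Longrightarrow> gen_ideal X \<subseteq> I"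
  unfolding gen_ideal_def by auto

lemma ideal_mpow: "is_ideal (mpow \<pi> i)"
  by (cases i) (simp add: is_ideal_def, simp only: mpow.simps ideal_gen)

lemma ideal_0: "is_ideal I \<Longrightarrow> 0 \<in> I" unfolding is_ideal_def by blast
lemma ideal_add: "is_ideal I \<Longrightarrow> x \<in> I \<Longrightarrow> y \<in> I \<Longrightarrow> x + y \<in> I" unfolding is_ideal_def by blast
lemma ideal_multl: "is_ideal I \<Longrightarrow> x \<in> I \<Longrightarrow> r * x \<in> I" unfolding is_ideal_def by blast
lemma ideal_multr: "is_ideal I \<Longrightarrow> x \<in> I \<Longrightarrow> x * r \<in> I" unfolding is_ideal_def by (metis mult.commute)
lemma ideal_uminus: "is_ideal I \<Longrightarrow> x \<in> I \<Longrightarrow> - x \<in> I"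
  using ideal_multl[of I x "-1"] by simp
lemma ideal_diff: "is_ideal I \<Longrightarrow> x \<in> I \<Longrightarrow> y \<in> I \<Longrightarrow> x - y \<in> I"
  by (metis diff_conv_add_uminus ideal_add ideal_uminus)
lemma ideal_sum: assumes I: "is_ideal I" shows "(\<And>x. x \<in> A \<Longrightarrow> g x \<in> I) \<Longrightarrow> sum g A \<in> I"
proof (induction A rule: infinite_finite_induct)
  case (infinite A) then show ?case using ideal_0[OF I] by simp
next
  case empty then show ?case using ideal_0[OF I] by simp
next
  case (insert x F)
  then have "g x \<in> I" "sum g F \<in> I" by auto
  then show ?case using insert(1,2) ideal_add[OF I] by simp
qed

lemma ideal_preimage: assumes f: "is_ring_hom f" and I: "is_ideal I" shows "is_ideal (f -` I)"
  unfolding is_ideal_def vimage_def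
proof (intro conjI ballI allI)
  show "0 \<in> {x. f x \<in> I}" using ideal_0[OF I] rh_0[OF f] by simp
  fix x y assume "x \<in> {x. f x \<in> I}" "y \<in> {x. f x \<in> I}"
  then show "x + y \<in> {x. f x \<in> I}" using ideal_add[OF I] rh_add[OF f] by simp
next
  fix r x assume "x \<in> {x. f x \<in> I}"
  then show "r * x \<in> {x. f x \<in> I}" using ideal_multl[OF I] rh_mult[OF f] by simp
qed

lemma hom_mpow:
  assumes f: "is_ring_hom f" and m: "\<And>x. x \<in> maxid \<pi>R \<Longrightarrow> f x \<in> maxid \<pi>S"
  shows "f ` mpow \<pi>R i \<subseteq> mpow \<pi>S i"
proof (induction i)
  case 0 then show ?case by simp
next
  case (Suc i)
  have "mpow \<pi>R (Suc i) \<subseteq> f -` mpow \<pi>S (Suc i)"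
    unfolding mpow.simps(2)
  proof (rule gen_ideal_least)
    show "is_ideal (f -` gen_ideal {a * b |a b. a \<in> maxid \<pi>S \<and> b \<in> mpow \<pi>S i})"
      by (rule ideal_preimage[OF f ideal_gen])
    show "{a * b |a b. a \<in> maxid \<pi>R \<and> b \<in> mpow \<pi>R i} \<subseteq> f -` gen_ideal {a * b |a b. a \<in> maxid \<pi>S \<and> b \<in> mpow \<pi>S i}"
    proof
      fix z assume "z \<in> {a * b |a b. a \<in> maxid \<pi>R \<and> b \<in> mpow \<pi>R i}"
      then obtain a b where z: "z = a * b" "a \<in> maxid \<pi>R" "b \<in> mpow \<pi>R i" by blast
      have fz: "f z = f a * f b" using z(1) rh_mult[OF f] by simp
      have fa: "f a \<in> maxid \<pi>S" using m z(2) by blast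
      have fb: "f b \<in> mpow \<pi>S i" using Suc.IH z(3) by blast
      have "f z \<in> {a * b |a b. a \<in> maxid \<pi>S \<and> b \<in> mpow \<pi>S i}"
        using fz fa fb by blast
      then have "f z \<in> gen_ideal {a * b |a b. a \<in> maxid \<pi>S \<and> b \<in> mpow \<pi>S i}"
        by (rule subsetD[OF gen_ideal_sub])
      then show "z \<in> f -` gen_ideal {a * b |a b. a \<in> maxid \<pi>S \<and> b \<in> mpow \<pi>S i}"
        by (rule vimageI2)
    qed
  qed
  then show ?case by (simp only: image_subset_iff_subset_vimage)
qed

lemma maxid_ideal: assumes h: "is_ring_hom \<pi>" shows "is_ideal (maxid \<pi>)"
  unfolding is_ideal_def maxid_def using rh_0[OF h] rh_add[OF h] rh_mult[OF h] by simp

lemma maxid_P: "is_ring_hom \<pi> \<Longrightarrow> (\<forall>a b. P$a$b - mat 1$a$b \<in> maxid \<pi>) \<longleftrightarrow> matmap \<pi> P = mat 1"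
  by (auto simp: maxid_def vec_eq_iff mat_def rh_diff rh_0 rh_1 split: if_splits)

lemma se_iff: "is_ring_hom \<pi>S \<Longrightarrow> strict_equiv \<pi>S \<rho> \<rho>' \<longleftrightarrow>
  (\<exists>P Q. P ** Q = mat 1 \<and> Q ** P = mat 1 \<and> matmap \<pi>S P = mat 1 \<and> (\<forall>g\<in>SL. \<rho>' g = P ** \<rho> g ** Q))"
  unfolding strict_equiv_def by (simp add: maxid_P)

lemma inv_red: "is_ring_hom \<pi> \<Longrightarrow> P ** Q = mat 1 \<Longrightarrow> matmap \<pi> P = mat 1 \<Longrightarrow> matmap \<pi> Q = mat 1"
  by (metis matmap_mult matmap_one matrix_mul_lid)

lemma se_refl: "is_ring_hom \<pi>S \<Longrightarrow> strict_equiv \<pi>S \<rho> \<rho>"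
  unfolding strict_equiv_def by (rule exI[of _ "mat 1"], rule exI[of _ "mat 1"]) (simp add: maxid_def rh_0)

lemma se_sym:
  assumes h: "is_ring_hom \<pi>S" and s: "strict_equiv \<pi>S \<rho> \<rho>'" shows "strict_equiv \<pi>S \<rho>' \<rho>"
proof -
  obtain P Q where PQ: "P ** Q = mat 1" "Q ** P = mat 1" "matmap \<pi>S P = mat 1" "\<forall>g\<in>SL. \<rho>' g = P ** \<rho> g ** Q"
    using s se_iff[OF h] by blast
  have "\<forall>g\<in>SL. \<rho> g = Q ** \<rho>' g ** P"
    using PQ(1,2,4) by (simp add: matrix_mul_assoc) (metis matrix_mul_assoc matrix_mul_lid matrix_mul_rid)
  then show ?thesis unfolding se_iff[OF h] using PQ inv_red[OF h PQ(1,3)] by blast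
qed

lemma se_trans:
  assumes h: "is_ring_hom \<pi>S" and s: "strict_equiv \<pi>S \<rho> \<rho>'" and t: "strict_equiv \<pi>S \<rho>' \<rho>''"
  shows "strict_equiv \<pi>S \<rho> \<rho>''"
proof -
  obtain P Q where PQ: "P ** Q = mat 1" "Q ** P = mat 1" "matmap \<pi>S P = mat 1" "\<forall>g\<in>SL. \<rho>' g = P ** \<rho> g ** Q"
    using s se_iff[OF h] by blast
  obtain P' Q' where PQ': "P' ** Q' = mat 1" "Q' ** P' = mat 1" "matmap \<pi>S P' = mat 1" "\<forall>g\<in>SL. \<rho>'' g = P' ** \<rho>' g ** Q'"
    using t se_iff[OF h] by blast
  have 1: "(P' ** P) ** (Q ** Q') = mat 1"
    by (metis PQ(1) PQ'(1) matrix_mul_assoc matrix_mul_rid)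
  have 2: "(Q ** Q') ** (P' ** P) = mat 1"
    by (metis PQ(2) PQ'(2) matrix_mul_assoc matrix_mul_rid)
  have 3: "matmap \<pi>S (P' ** P) = mat 1" using PQ(3) PQ'(3) by (simp add: matmap_mult[OF h])
  have "\<forall>g\<in>SL. \<rho>'' g = (P' ** P) ** \<rho> g ** (Q ** Q')"
    using PQ(4) PQ'(4) by (simp add: matrix_mul_assoc)
  then show ?thesis unfolding se_iff[OF h] using 1 2 3 by blast
qed

lemma cong_mult_left:
  assumes I: "is_ideal I" and d: "\<forall>a b. A$a$b - B$a$b \<in> I"
  shows "\<forall>a b. (M ** A)$a$b - (M ** B)$a$b \<in> I"
proof (intro allI)
  fix a b
  have "(M ** A)$a$b - (M ** B)$a$b = (\<Sum>k\<in>UNIV. M$a$k * (A$k$b - B$k$b))"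
    by (simp add: matrix_matrix_mult_def sum_subtractf right_diff_distrib)
  also have "\<dots> \<in> I" using d by (intro ideal_sum[OF I] ideal_multl[OF I]) auto
  finally show "(M ** A)$a$b - (M ** B)$a$b \<in> I" .
qed

lemma cong_mult_right:
  assumes I: "is_ideal I" and d: "\<forall>a b. A$a$b - B$a$b \<in> I"
  shows "\<forall>a b. (A ** M)$a$b - (B ** M)$a$b \<in> I"
proof (intro allI)
  fix a b
  have "(A ** M)$a$b - (B ** M)$a$b = (\<Sum>k\<in>UNIV. (A$a$k - B$a$k) * M$k$b)"
    by (simp add: matrix_matrix_mult_def sum_subtractf left_diff_distrib)
  also have "\<dots> \<in> I" using d by (intro ideal_sum[OF I] ideal_multr[OF I]) auto
  finally show "(A ** M)$a$b - (B ** M)$a$b \<in> I" .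
qed

lemma matcong_conj: "matcong \<pi> i A B \<Longrightarrow> matcong \<pi> i (P ** A ** Q) (P ** B ** Q)"
  unfolding matcong_def using cong_mult_right[OF ideal_mpow cong_mult_left[OF ideal_mpow]] by blast

lemma cobj_rh: "cobj \<pi> \<Longrightarrow> is_ring_hom \<pi>" unfolding cobj_def by blast

lemma lift_conj:
  fixes \<rho> \<rho>' :: "'r::comm_ring_1^'n^'n \<Rightarrow> 's::comm_ring_1^'n^'n"
  assumes h: "is_ring_hom \<pi>S" and l: "is_lift \<pi>R \<pi>S \<rho>" and s: "strict_equiv \<pi>S \<rho> \<rho>'"
  shows "is_lift \<pi>R \<pi>S \<rho>'"
proof -
  obtain P Q where PQ: "P ** Q = mat 1" "Q ** P = mat 1" "matmap \<pi>S P = mat 1" "\<forall>g\<in>SL. \<rho>' g = P ** \<rho> g ** Q"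
    using s se_iff[OF h] by blast
  have Qr: "matmap \<pi>S Q = mat 1" using inv_red[OF h PQ(1,3)] .
  have conj_mult: "(P ** A ** Q) ** (P ** B ** Q) = P ** (A ** B) ** Q" for A B
  proof -
    have "(P ** A ** Q) ** (P ** B ** Q) = P ** A ** (Q ** P) ** B ** Q" by (simp add: matrix_mul_assoc)
    then show ?thesis using PQ(2) by (simp add: matrix_mul_assoc)
  qed
  show ?thesis unfolding is_lift_def
  proof (intro conjI ballI allI)
    fix g :: "'r^'n^'n" assume g: "g \<in> SL"
    obtain B where B: "\<rho> g ** B = mat 1" "B ** \<rho> g = mat 1" using l g unfolding is_lift_def is_GL_def by blast
    show "is_GL (\<rho>' g)" unfolding is_GL_def PQ(4)[rule_format, OF g]
      by (rule exI[of _ "P ** B ** Q"]) (simp add: conj_mult B PQ)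
    show "matmap \<pi>S (\<rho>' g) = matmap \<pi>R g"
      using l g PQ(3) Qr unfolding is_lift_def PQ(4)[rule_format, OF g] by (simp add: matmap_mult[OF h])
    fix i
    obtain j where j: "\<forall>h\<in>SL. matcong \<pi>R j g h \<longrightarrow> matcong \<pi>S i (\<rho> g) (\<rho> h)" using l g unfolding is_lift_def by blast
    show "\<exists>j. \<forall>h\<in>SL. matcong \<pi>R j g h \<longrightarrow> matcong \<pi>S i (\<rho>' g) (\<rho>' h)"
      using j PQ(4) g by (auto intro!: exI[of _ j] matcong_conj)
  next
    fix g h :: "'r^'n^'n" assume g: "g \<in> SL" and hh: "h \<in> SL"
    then have "g ** h \<in> SL" by (simp add: SL_def det_mul)
    then show "\<rho>' (g ** h) = \<rho>' g ** \<rho>' h" using l g hh PQ(4) unfolding is_lift_def by (simp add: conj_mult)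
  qed
qed

definition dg :: "('n \<Rightarrow> 'a::comm_ring_1) \<Rightarrow> 'a^'n^'n" where
  "dg d = (\<chi> i j. if i = j then d i else 0)"

definition wm :: "'a::comm_ring_1 \<Rightarrow> 'a \<Rightarrow> 'n \<Rightarrow> 'n \<Rightarrow> 'a^'n^'n" where
  "wm u v a b = elt u a b ** elt (-v) b a ** elt u a b"

definition hm :: "'a::comm_ring_1 \<Rightarrow> 'a \<Rightarrow> 'n \<Rightarrow> 'n \<Rightarrow> 'a^'n^'n" where
  "hm u v a b = dg (\<lambda>x. if x = a then u else if x = b then v else 1)"

lemma if0_mult: "(if P then x else 0) * (y::'a::comm_ring_1) = (if P then x * y else 0)" by simp
lemma mult_if0: "(y::'a::comm_ring_1) * (if P then x else 0) = (if P then y * x else 0)" by simp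

lemma dg_ml: "(dg d ** M) $ i $ j = d i * M$i$j"
  by (simp add: matrix_matrix_mult_def dg_def if0_mult)

lemma dg_mr: "(M ** dg d) $ i $ j = M$i$j * d j"
  by (simp add: matrix_matrix_mult_def dg_def mult_if0)

lemma elt_0: "elt 0 a b = mat 1"
  by (simp add: vec_eq_iff elt_entry mat_def)

lemma dg_entry: "dg d $ i $ j = (if i = j then d i else 0)" by (simp add: dg_def)

lemma wm_entry:
  assumes "a \<noteq> b" "u * v = 1"
  shows "wm u v a b $ x $ y = (if x = a \<and> y = b then u else if x = b \<and> y = a then -v else
            if x = a \<or> x = b then 0 else if x = y then 1 else 0)"
  using assms unfolding wm_def
  by (auto simp: elt_mr elt_entry algebra_simps)

lemma wm_hm:
  assumes "a \<noteq> b" "u * v = 1"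
  shows "wm u v a b ** wm (-1) (-1) a b = hm u v a b"
proof -
  have "wm u v a b ** wm (-1) (-1) a b = wm u v a b ** elt (-1) a b ** elt 1 b a ** elt (-1) a b"
    unfolding wm_def by (simp add: matrix_mul_assoc)
  also have "\<dots> = hm u v a b"
    using assms by (auto simp: vec_eq_iff elt_mr wm_entry hm_def dg_entry algebra_simps)
  finally show ?thesis .
qed

inductive_set Eg :: "('a::comm_ring_1^'n^'n) set" where
  Eg1: "mat 1 \<in> Eg"
| Eg2: "a \<noteq> b \<Longrightarrow> A \<in> Eg \<Longrightarrow> elt r a b ** A \<in> Eg"

lemma Eg_mult: "A \<in> Eg \<Longrightarrow> B \<in> Eg \<Longrightarrow> A ** B \<in> Eg"
  by (induction A rule: Eg.induct) (auto simp: matrix_mul_assoc[symmetric] intro: Eg.intros)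

lemma elt_Eg: "a \<noteq> b \<Longrightarrow> elt r a b \<in> Eg"
  using Eg2[OF _ Eg1] by fastforce

lemma Eg_inv: "A \<in> Eg \<Longrightarrow> \<exists>B\<in>Eg. A ** B = mat 1 \<and> B ** A = mat 1"
proof (induction A rule: Eg.induct)
  case Eg1 then show ?case using Eg.Eg1 by force
next
  case (Eg2 a b A r)
  then obtain B where B: "B \<in> Eg" "A ** B = mat 1" "B ** A = mat 1" by blast
  have e1: "elt r a b ** elt (-r) a b = mat 1" "elt (-r) a b ** elt r a b = mat 1"
    using Eg2(1) by (simp_all add: elt_add elt_0)
  show ?case
  proof (intro bexI conjI)
    show "B ** elt (-r) a b \<in> Eg" by (rule Eg_mult[OF B(1) elt_Eg[OF Eg2(1)]])
    show "elt r a b ** A ** (B ** elt (- r) a b) = mat 1"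
      by (metis B(2) e1(1) matrix_mul_assoc matrix_mul_rid)
    show "B ** elt (- r) a b ** (elt r a b ** A) = mat 1"
      by (metis B(3) e1(2) matrix_mul_assoc matrix_mul_rid)
  qed
qed

lemma Eg_det: "A \<in> Eg \<Longrightarrow> det A = 1"
  by (induction A rule: Eg.induct) (auto simp: det_mul det_elt)

lemma Eg_SL: "A \<in> Eg \<Longrightarrow> A \<in> SL" by (simp add: SL_def Eg_det)

lemma wm_Eg: "a \<noteq> b \<Longrightarrow> wm u v a b \<in> Eg"
  unfolding wm_def by (intro Eg_mult elt_Eg) auto

lemma hm_Eg: "a \<noteq> b \<Longrightarrow> u * v = 1 \<Longrightarrow> hm u v a b \<in> Eg"
  by (metis wm_hm wm_Eg Eg_mult)

definition Kred :: "'n set \<Rightarrow> 'a::comm_ring_1^'n^'n \<Rightarrow> bool" where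
  "Kred K A \<longleftrightarrow> (\<forall>k\<in>K. \<forall>j. A$k$j = (if k = j then 1 else 0) \<and> A$j$k = (if k = j then 1 else 0))"

locale locR =
  fixes \<pi> :: "'r::comm_ring_1 \<Rightarrow> 'k::field"
  assumes hom: "is_ring_hom \<pi>"
  and loc: "\<And>x. \<pi> x \<noteq> 0 \<Longrightarrow> \<exists>y. x * y = 1"
begin

lemma clear_col:
  fixes B :: "'r^'n^'n"
  assumes K: "Kred K B" and i: "i \<notin> K" and v: "B$i$i * v = 1"
    and J: "finite J" "J \<subseteq> - K - {i}"
  shows "\<exists>L\<in>Eg. Kred K (L ** B) \<and> (\<forall>l. (L ** B)$i$l = B$i$l) \<and> (\<forall>j\<in>J. (L ** B)$j$i = 0)"
  using J
proof (induction J rule: finite_induct)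
  case empty then show ?case using K Eg1 by force
next
  case (insert j J)
  then obtain L where L: "L \<in> Eg" "Kred K (L ** B)" "\<forall>l. (L ** B)$i$l = B$i$l" "\<forall>j\<in>J. (L ** B)$j$i = 0"
    by blast
  define C where "C = L ** B"
  have ji: "j \<noteq> i" "j \<notin> K" using insert by auto
  define L' where "L' = elt (-(C$j$i * v)) j i ** L"
  have L'B: "L' ** B = elt (-(C$j$i * v)) j i ** C" unfolding L'_def C_def by (simp add: matrix_mul_assoc)
  have CK: "Kred K C" using L C_def by simp
  have Ci: "C$i$l = B$i$l" for l using L C_def by simp
  show ?case
  proof (intro bexI conjI ballI allI)
    show "L' \<in> Eg" unfolding L'_def using ji L by (auto intro: Eg.intros)
    show "Kred K (L' ** B)" unfolding L'B using CK ji i Ci K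
      by (auto simp: Kred_def elt_ml)
    fix l show "(L' ** B)$i$l = B$i$l" unfolding L'B using ji Ci by (simp add: elt_ml)
  next
    fix j' assume "j' \<in> insert j J"
    then show "(L' ** B)$j'$i = 0" unfolding L'B using ji Ci v L(4) C_def
      by (auto simp: elt_ml algebra_simps) (metis mult.assoc mult.commute mult_1)
  qed
qed

lemma clear_row:
  fixes C :: "'r^'n^'n"
  assumes K: "Kred K C" and i: "i \<notin> K" and v: "C$i$i * v = 1" and c: "\<forall>x. x \<noteq> i \<longrightarrow> C$x$i = 0"
    and J: "finite J" "J \<subseteq> - K - {i}"
  shows "\<exists>M\<in>Eg. Kred K (C ** M) \<and> (\<forall>x. (C ** M)$x$i = C$x$i) \<and> (\<forall>j\<in>J. (C ** M)$i$j = 0)"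
  using J
proof (induction J rule: finite_induct)
  case empty then show ?case using K Eg1 by force
next
  case (insert j J)
  then obtain M where M: "M \<in> Eg" "Kred K (C ** M)" "\<forall>x. (C ** M)$x$i = C$x$i" "\<forall>j\<in>J. (C ** M)$i$j = 0"
    by blast
  define D where "D = C ** M"
  have ji: "j \<noteq> i" "j \<notin> K" using insert by auto
  define M' where "M' = M ** elt (-(D$i$j * v)) i j"
  have CM: "C ** M' = D ** elt (-(D$i$j * v)) i j" unfolding M'_def D_def by (simp add: matrix_mul_assoc)
  have DK: "Kred K D" using M D_def by simp
  have Di: "D$x$i = C$x$i" for x using M D_def by simp
  show ?case
  proof (intro bexI conjI ballI allI)
    show "M' \<in> Eg" unfolding M'_def using ji M by (auto intro: Eg_mult elt_Eg)
    show "Kred K (C ** M')" unfolding CM using DK ji i Di K c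
      by (auto simp: Kred_def elt_mr)
    fix x show "(C ** M')$x$i = C$x$i" unfolding CM using ji Di by (simp add: elt_mr)
  next
    fix j' assume "j' \<in> insert j J"
    then show "(C ** M')$i$j' = 0" unfolding CM using ji Di v M(4) D_def
      by (auto simp: elt_mr algebra_simps) (metis mult.assoc mult.commute mult_1)
  qed
qed

end

context locR
begin

lemma col_unit:
  fixes A :: "'r^'n^'n"
  assumes d: "det A = 1" and K: "Kred K A" and i: "i \<notin> K"
  shows "\<exists>j. j \<notin> K \<and> \<pi> (A$j$i) \<noteq> 0"
proof (rule ccontr)
  assume "\<not> ?thesis"
  then have z: "\<And>j. j \<notin> K \<Longrightarrow> \<pi> (A$j$i) = 0" by blast
  have "\<pi> (A$j$i) = 0" for j
  proof (cases "j \<in> K")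
    case True
    then have "A$j$i = 0" using K i unfolding Kred_def by auto
    then show ?thesis by (simp add: rh_0[OF hom])
  next
    case False then show ?thesis by (rule z)
  qed
  then have "column i (matmap \<pi> A) = 0" by (simp add: column_def vec_eq_iff)
  then have "det (matmap \<pi> A) = 0" by (rule det_zero_column(2))
  moreover have "det (matmap \<pi> A) = 1" using matmap_det[OF hom, of A] d rh_1[OF hom] by simp
  ultimately show False by simp
qed

lemma Kred_UNIV: "Kred UNIV A \<Longrightarrow> A = mat 1"
  unfolding Kred_def by (simp add: vec_eq_iff mat_def)

lemma Eg_solve:
  assumes X: "X \<in> Eg" and M: "M \<in> Eg" and E: "X ** A ** M \<in> Eg"
  shows "A \<in> Eg"
proof -
  obtain X' where X': "X' \<in> Eg" "X' ** X = mat 1" using Eg_inv[OF X] by blast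
  obtain M' where M': "M' \<in> Eg" "M ** M' = mat 1" using Eg_inv[OF M] by blast
  have "X' ** (X ** A ** M) ** M' = (X' ** X) ** A ** (M ** M')" by (simp add: matrix_mul_assoc)
  also have "\<dots> = A" using X'(2) M'(2) by simp
  finally have eq: "X' ** (X ** A ** M) ** M' = A" .
  have "X' ** (X ** A ** M) ** M' \<in> Eg" by (intro Eg_mult X'(1) M'(1) E)
  then show ?thesis by (simp only: eq)
qed

lemma gen_aux:
  "\<forall>K (A::'r^'n^'n). card (- K) = m \<longrightarrow> Kred K A \<longrightarrow> det A = 1 \<longrightarrow> A \<in> Eg"
proof (induction m)
  case 0
  show ?case
  proof (intro allI impI)
    fix K and A :: "'r^'n^'n"
    assume c: "card (- K) = 0" and K: "Kred K A" and "det A = 1"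
    then have e: "- K = {}" by simp
    have allK: "k \<in> K" for k
    proof (rule ccontr)
      assume "k \<notin> K"
      then have "k \<in> - K" by simp
      then show False using e by simp
    qed
    have "K = UNIV" using UNIV_eq_I[of K] allK by simp
    then show "A \<in> Eg" using K Kred_UNIV[of A] Eg1 by simp
  qed
next
  case (Suc m)
  show ?case
  proof (intro allI impI)
    fix K and A :: "'r^'n^'n"
    assume c: "card (- K) = Suc m" and K: "Kred K A" and dA: "det A = 1"
    have ne: "- K \<noteq> {}"
    proof
      assume "- K = {}"
      then have "card (- K) = 0" by simp
      with c show False by simp
    qed
    then obtain i where "i \<in> - K" using ex_in_conv[of "- K"] by auto
    then have i: "i \<notin> K" by simp
    show "A \<in> Eg"
    proof (cases "m = 0")
      case True
      then have "\<exists>x. - K = {x}" using c by (simp add: card_1_singleton_iff)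
      then obtain x where x: "- K = {x}" by blast
      then have ci: "- K = {i}" using i by auto
      have off: "A$x$y = 0" if "x \<noteq> y" for x y
      proof (cases "x \<in> K")
        case True then show ?thesis using K that unfolding Kred_def by auto
      next
        case False
        then have "x = i" using ci by auto
        then have "y \<in> K" using that ci by auto
        then show ?thesis using K that unfolding Kred_def by auto
      qed
      have dk: "A$x$x = 1" if "x \<noteq> i" for x
      proof -
        have "x \<in> K" using that ci by auto
        then show ?thesis using K unfolding Kred_def by auto
      qed
      have "det A = (\<Prod>x\<in>UNIV. A$x$x)" by (rule det_diagonal) (rule off)
      also have "\<dots> = A$i$i * (\<Prod>x\<in>UNIV - {i}. A$x$x)"
        by (simp add: prod.remove)
      also have "(\<Prod>x\<in>UNIV - {i}. A$x$x) = 1" using dk by (intro prod.neutral) auto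
      finally have "A$i$i = 1" using dA by simp
      then have diag: "A$x$x = 1" for x using dk by (cases "x = i") auto
      have "A = mat 1" using off diag by (auto simp: vec_eq_iff mat_def)
      then show ?thesis using Eg1 by simp
    next
      case False
      have "card (- K - {i}) = m" using c i by simp
      have ne2: "- K - {i} \<noteq> {}"
      proof
        assume "- K - {i} = {}"
        then have "card (- K - {i}) = 0" by simp
        with \<open>card (- K - {i}) = m\<close> False show False by simp
      qed
      then obtain j0 where "j0 \<in> - K - {i}" using ex_in_conv[of "- K - {i}"] by auto
      then have j0: "j0 \<notin> K" "j0 \<noteq> i" by auto
      obtain j where j: "j \<notin> K" "\<pi> (A$j$i) \<noteq> 0" using col_unit[OF dA K i] by blast
      obtain L1 where L1: "L1 \<in> Eg" "Kred K (L1 ** A)" "\<pi> ((L1 ** A)$i$i) \<noteq> 0"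
      proof (cases "\<pi> (A$i$i) = 0")
        case False
        then show ?thesis using that[of "mat 1"] K Eg1 by simp
      next
        case True
        then have ji: "j \<noteq> i" using j by auto
        have kr: "Kred K (elt 1 i j ** A)" using K i j ji unfolding Kred_def by (auto simp: elt_ml)
        have pn: "\<pi> ((elt 1 i j ** A)$i$i) \<noteq> 0"
          using True j by (simp add: elt_ml rh_add[OF hom])
        have e: "elt 1 i j \<in> Eg" using elt_Eg[of i j 1] ji by simp
        show ?thesis by (rule that[OF e kr pn])
      qed
      define B where "B = L1 ** A"
      obtain v where v: "B$i$i * v = 1" using loc L1(3) B_def by blast
      obtain L2 where L2: "L2 \<in> Eg" "Kred K (L2 ** B)" "\<forall>l. (L2 ** B)$i$l = B$i$l"
          "\<forall>j\<in>- K - {i}. (L2 ** B)$j$i = 0"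
        using clear_col[OF _ i v, of "- K - {i}"] L1(2) B_def by auto
      define C where "C = L2 ** B"
      have Cc: "\<forall>x. x \<noteq> i \<longrightarrow> C$x$i = 0"
      proof (intro allI impI)
        fix x assume "x \<noteq> i"
        show "C$x$i = 0"
        proof (cases "x \<in> K")
          case True then show ?thesis using L2(2) C_def \<open>x \<noteq> i\<close> unfolding Kred_def by auto
        next
          case False then show ?thesis using L2(4) C_def \<open>x \<noteq> i\<close> by auto
        qed
      qed
      have Cv: "C$i$i * v = 1" using L2(3) v C_def by simp
      obtain M where M: "M \<in> Eg" "Kred K (C ** M)" "\<forall>x. (C ** M)$x$i = C$x$i"
          "\<forall>j\<in>- K - {i}. (C ** M)$i$j = 0"
        using clear_row[OF _ i Cv Cc, of "- K - {i}"] L2(2) C_def by auto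
      define D where "D = C ** M"
      have Dr: "D$i$y = 0" if "y \<noteq> i" for y
      proof (cases "y \<in> K")
        case True then show ?thesis using M(2) D_def that unfolding Kred_def by auto
      next
        case False then show ?thesis using M(4) D_def that by auto
      qed
      have Dc: "D$x$i = 0" if "x \<noteq> i" for x using M(3) Cc D_def that by auto
      have Dii: "D$i$i * v = 1" using M(3) Cv D_def by simp
      define H where "H = hm v (D$i$i) i j0"
      have H: "H \<in> Eg" unfolding H_def using hm_Eg[OF j0(2)[symmetric], of v "D$i$i"] Dii
        by (simp add: mult.commute)
      have HD: "(H ** D)$x$y = (if x = i then v else if x = j0 then D$i$i else 1) * D$x$y" for x y
        unfolding H_def hm_def dg_ml using j0 by simp
      have KD: "Kred K D" using M(2) D_def by simp
      have red: "Kred (insert i K) (H ** D)"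
        unfolding Kred_def
      proof (intro ballI allI conjI)
        fix k y assume k: "k \<in> insert i K"
        show "(H ** D)$k$y = (if k = y then 1 else 0)"
        proof (cases "k = i")
          case True then show ?thesis using Dr Dii by (auto simp: HD mult.commute)
        next
          case False
          then have "k \<in> K" using k by auto
          then show ?thesis using KD j0 False unfolding Kred_def by (auto simp: HD)
        qed
        show "(H ** D)$y$k = (if k = y then 1 else 0)"
        proof (cases "k = i")
          case True then show ?thesis using Dc Dii by (auto simp: HD mult.commute)
        next
          case False
          then have "k \<in> K" using k by auto
          then show ?thesis using KD j0 False i unfolding Kred_def by (auto simp: HD)
        qed
      qed
      have HDe: "H ** D = (H ** L2 ** L1) ** A ** M"
        unfolding D_def C_def B_def by (simp add: matrix_mul_assoc)
      have X: "H ** L2 ** L1 \<in> Eg" using H L2(1) L1(1) by (intro Eg_mult)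
      have "det (H ** D) = 1" unfolding HDe using Eg_det[OF X] Eg_det[OF M(1)] dA by (simp add: det_mul)
      moreover have "card (- insert i K) = m" using c i by (simp add: Compl_insert)
      ultimately have "H ** D \<in> Eg" using Suc.IH red by blast
      then show ?thesis unfolding HDe by (rule Eg_solve[OF X M(1)])
    qed
  qed
qed

lemma gen: "det (A::'r^'n^'n) = 1 \<Longrightarrow> A \<in> Eg"
proof -
  assume "det A = 1"
  moreover have "Kred {} A" by (simp add: Kred_def)
  ultimately show ?thesis using gen_aux[of "card (- ({}::'n set))", rule_format, of "{}" A] by simp
qed

end

lemma R1:
  assumes "a \<noteq> b" "u * u' = 1"
  shows "wm u u' a b ** elt 1 b a = elt (-(u*u)) a b ** (wm u u' a b :: 'a::comm_ring_1^'n^'n)"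
proof -
  have e: "u * (u * u') = u" using assms(2) by simp
  show ?thesis using assms
    by (auto simp: vec_eq_iff elt_mr elt_ml wm_entry) (simp add: algebra_simps e)
qed

lemma Rcol:
  assumes "a \<noteq> b" "k \<noteq> a" "k \<noteq> b"
  shows "wm 1 1 a b ** elt r b k = elt r a k ** (wm 1 1 a b :: 'a::comm_ring_1^'n^'n)"
  using assms by (auto simp: vec_eq_iff elt_mr elt_ml wm_entry)

lemma Rrow:
  assumes "a \<noteq> b" "k \<noteq> a" "k \<noteq> b"
  shows "wm 1 1 a b ** elt r k a = elt (-r) k b ** (wm 1 1 a b :: 'a::comm_ring_1^'n^'n)"
  using assms by (auto simp: vec_eq_iff elt_mr elt_ml wm_entry)

lemma dg_dg: "dg d ** dg d' = dg (\<lambda>i. d i * d' i)"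
  by (simp add: vec_eq_iff dg_ml dg_entry)

lemma Hmul:
  "hm p p2 a b ** hm q q2 a b = (hm (p * q) (p2 * q2) a b :: 'a::comm_ring_1^'n^'n)"
  unfolding hm_def dg_dg by (rule arg_cong[where f=dg]) auto

lemma hm_entry: "a \<noteq> b \<Longrightarrow> hm u u' a b $ a $ a = u"
  by (simp add: hm_def dg_entry)

lemma wm_prod:
  assumes "a \<noteq> b" "X * X' = 1" "E * E' = 1"
  shows "wm X X' a b ** wm (-E) (-E') a b = (hm (X * E') (X' * E) a b :: 'a::comm_ring_1^'n^'n)"
proof -
  have e1: "E * (E' * z) = z" for z using assms(3) by (simp add: mult.assoc[symmetric])
  have "wm X X' a b ** wm (-E) (-E') a b = wm X X' a b ** elt (-E) a b ** elt E' b a ** elt (-E) a b"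
    unfolding wm_def by (simp add: matrix_mul_assoc)
  also have "\<dots> = hm (X * E') (X' * E) a b"
    using assms by (auto simp: vec_eq_iff elt_mr wm_entry hm_def dg_entry algebra_simps e1)
  finally show ?thesis .
qed

locale liftctx =
  fixes \<pi>R :: "'r::comm_ring_1 \<Rightarrow> 'k::field" and \<pi>S :: "'s::comm_ring_1 \<Rightarrow> 'k"
    and \<rho> :: "'r^'n^'n \<Rightarrow> 's^'n^'n"
  assumes homR: "is_ring_hom \<pi>R" and locRR: "\<And>x. \<pi>R x \<noteq> 0 \<Longrightarrow> \<exists>y. x * y = 1"
    and homS: "is_ring_hom \<pi>S" and locSS: "\<And>x. \<pi>S x \<noteq> 0 \<Longrightarrow> \<exists>y. x * y = 1"
    and rmult: "\<And>g h. g \<in> SL \<Longrightarrow> h \<in> SL \<Longrightarrow> \<rho> (g ** h) = \<rho> g ** \<rho> h"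
    and rred: "\<And>g. g \<in> SL \<Longrightarrow> matmap \<pi>S (\<rho> g) = matmap \<pi>R g"
    and Hyp: "\<And>a b r. a \<noteq> b \<Longrightarrow> \<exists>c. \<rho> (elt r a b) = elt c a b"
begin

definition cc :: "'n \<Rightarrow> 'n \<Rightarrow> 'r \<Rightarrow> 's" where
  "cc a b r = \<rho> (elt r a b) $ a $ b"

abbreviation e :: "'n \<Rightarrow> 'n \<Rightarrow> 's" where "e a b \<equiv> cc a b 1"

lemma SL_mult: "g \<in> SL \<Longrightarrow> h \<in> SL \<Longrightarrow> g ** h \<in> SL"
  by (simp add: SL_def det_mul)

lemma elt_SL: "a \<noteq> b \<Longrightarrow> elt r a b \<in> SL"
  by (simp add: SL_def det_elt)

lemma rho_elt: "a \<noteq> b \<Longrightarrow> \<rho> (elt r a b) = elt (cc a b r) a b"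
proof -
  assume ab: "a \<noteq> b"
  obtain c where c: "\<rho> (elt r a b) = elt c a b" using Hyp[OF ab] by blast
  then have "cc a b r = c" unfolding cc_def using ab by (simp add: elt_entry)
  then show ?thesis using c by simp
qed

lemma cc_add: "a \<noteq> b \<Longrightarrow> cc a b (r + s) = cc a b r + cc a b s"
proof -
  assume ab: "a \<noteq> b"
  have "elt (cc a b (r + s)) a b = \<rho> (elt r a b ** elt s a b)"
    using ab by (simp add: rho_elt elt_add)
  also have "\<dots> = elt (cc a b r + cc a b s) a b"
    by (simp only: rmult[OF elt_SL[OF ab] elt_SL[OF ab]] rho_elt[OF ab]) (rule elt_add[OF ab])
  finally show ?thesis by (simp only: elt_inj[OF ab])
qed

lemma cc_0: "a \<noteq> b \<Longrightarrow> cc a b 0 = 0"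
  using cc_add[of a b 0 0] by simp

lemma cc_neg: "a \<noteq> b \<Longrightarrow> cc a b (- r) = - cc a b r"
proof -
  assume ab: "a \<noteq> b"
  have "cc a b r + cc a b (- r) = 0" using cc_add[OF ab, of r "-r"] cc_0[OF ab] by simp
  then show ?thesis using minus_unique by (metis add.commute)
qed

lemma cc_diff: "a \<noteq> b \<Longrightarrow> cc a b (r - s) = cc a b r - cc a b s"
  using cc_add[of a b r "-s"] cc_neg[of a b s] by simp

lemma cc_red: "a \<noteq> b \<Longrightarrow> \<pi>S (cc a b r) = \<pi>R r"
proof -
  assume ab: "a \<noteq> b"
  have "elt (\<pi>S (cc a b r)) a b = elt (\<pi>R r) a b"
    using rred[OF elt_SL[OF ab, of r]] ab by (simp add: rho_elt matmap_elt homR homS)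
  then show ?thesis using elt_inj[OF ab] by blast
qed

lemma e_unit: "a \<noteq> b \<Longrightarrow> \<exists>y. e a b * y = 1"
  using locSS cc_red[of a b 1] rh_1[OF homR] by auto

lemma rho_wm0: "a \<noteq> b \<Longrightarrow> \<rho> (wm u u' a b) = elt (cc a b u) a b ** elt (cc b a (-u')) b a ** elt (cc a b u) a b"
  unfolding wm_def by (simp add: rmult SL_mult elt_SL rho_elt)

lemma cc_inv:
  assumes ab: "a \<noteq> b" and u: "u * u' = 1"
  shows "cc a b u * cc b a u' = 1"
proof -
  define W where "W = \<rho> (wm u u' a b)"
  have wSL: "wm u u' a b \<in> SL" using wm_Eg[OF ab] Eg_SL by blast
  have "\<rho> (wm u u' a b ** elt 1 b a) = \<rho> (elt (-(u*u)) a b ** wm u u' a b)"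
    using R1[OF ab u] by simp
  then have eq: "W ** elt (e b a) b a = elt (cc a b (-(u*u))) a b ** W"
    unfolding W_def using ab wSL by (simp add: rmult elt_SL rho_elt)
  have "(W ** elt (e b a) b a) $ b $ a = (elt (cc a b (-(u*u))) a b ** W) $ b $ a"
    using eq by simp
  then have "W $ b $ b * e b a = 0" using ab by (simp add: elt_mr elt_ml)
  moreover obtain y where y: "e b a * y = 1" using e_unit[OF ab[symmetric]] by blast
  ultimately have Wbb: "W $ b $ b = 0" by (metis mult.assoc mult_1_right mult_zero_left)
  have "W $ b $ b = 1 + cc b a (-u') * cc a b u"
    unfolding W_def rho_wm0[OF ab] using ab by (simp add: elt_mr elt_entry)
  then have "1 + - (cc b a u' * cc a b u) = 0" using Wbb cc_neg ab by simp
  then show ?thesis by (simp add: algebra_simps add_eq_0_iff2 mult.commute)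
qed

end

context liftctx
begin

lemma rho_wm: "a \<noteq> b \<Longrightarrow> \<rho> (wm u u' a b) = wm (cc a b u) (cc b a u') a b"
  using rho_wm0[of a b u u'] cc_neg[of b a u'] by (simp add: wm_def)

lemma e_inv: "a \<noteq> b \<Longrightarrow> e a b * e b a = 1"
  using cc_inv[of a b 1 1] by simp

lemma wm_SL: "a \<noteq> b \<Longrightarrow> wm u u' a b \<in> SL" using wm_Eg Eg_SL by blast
lemma hm_SL: "a \<noteq> b \<Longrightarrow> u * u' = 1 \<Longrightarrow> hm u u' a b \<in> SL" using hm_Eg Eg_SL by blast

lemma rho_hm:
  assumes ab: "a \<noteq> b" and u: "u * u' = 1"
  shows "\<rho> (hm u u' a b) = hm (cc a b u * e b a) (cc b a u' * e a b) a b"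
proof -
  have "\<rho> (hm u u' a b) = \<rho> (wm u u' a b ** wm (-1) (-1) a b)" using wm_hm[OF ab u] by simp
  also have "\<dots> = wm (cc a b u) (cc b a u') a b ** wm (cc a b (-1)) (cc b a (-1)) a b"
    using ab by (simp add: rmult wm_SL rho_wm)
  also have "\<dots> = wm (cc a b u) (cc b a u') a b ** wm (- e a b) (- e b a) a b"
    using ab by (simp add: cc_neg)
  also have "\<dots> = hm (cc a b u * e b a) (cc b a u' * e a b) a b"
    by (rule wm_prod[OF ab cc_inv[OF ab u] e_inv[OF ab]])
  finally show ?thesis .
qed

definition psi :: "'n \<Rightarrow> 'n \<Rightarrow> 'r \<Rightarrow> 's" where "psi a b r = cc a b r * e b a"

lemma psi_mult_units:
  assumes ab: "a \<noteq> b" and u: "u * u' = 1" and v: "v * v' = 1"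
  shows "psi a b (u * v) = psi a b u * psi a b v"
proof -
  have uv: "(u * v) * (u' * v') = 1" using u v by (simp add: algebra_simps)
  have "\<rho> (hm u u' a b ** hm v v' a b) = \<rho> (hm (u * v) (u' * v') a b)" by (simp add: Hmul)
  then have "hm (psi a b u) (cc b a u' * e a b) a b ** hm (psi a b v) (cc b a v' * e a b) a b
      = hm (psi a b (u * v)) (cc b a (u' * v') * e a b) a b"
    using ab u v uv by (simp add: rmult hm_SL rho_hm psi_def)
  then have "hm (psi a b u * psi a b v) (cc b a u' * e a b * (cc b a v' * e a b)) a b
      = hm (psi a b (u * v)) (cc b a (u' * v') * e a b) a b" by (simp add: Hmul)
  then have "hm (psi a b u * psi a b v) (cc b a u' * e a b * (cc b a v' * e a b)) a b $ a $ a
      = hm (psi a b (u * v)) (cc b a (u' * v') * e a b) a b $ a $ a" by simp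
  then show ?thesis using ab by (simp add: hm_entry)
qed

lemma col:
  assumes ab: "a \<noteq> b" and ka: "k \<noteq> a" and kb: "k \<noteq> b"
  shows "cc a k r = e a b * cc b k r"
proof -
  have "\<rho> (wm 1 1 a b ** elt r b k) = \<rho> (elt r a k ** wm 1 1 a b)" using Rcol[OF ab ka kb, of r] by (rule arg_cong)
  then have eq: "wm (e a b) (e b a) a b ** elt (cc b k r) b k = elt (cc a k r) a k ** wm (e a b) (e b a) a b"
    using ab ka kb by (simp add: rmult wm_SL elt_SL rho_wm rho_elt)
  have "(wm (e a b) (e b a) a b ** elt (cc b k r) b k) $ a $ k = (elt (cc a k r) a k ** wm (e a b) (e b a) a b) $ a $ k"
    using eq by simp
  then show ?thesis using ab ka kb e_inv[OF ab] by (simp add: elt_mr elt_ml wm_entry)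
qed

lemma row:
  assumes ab: "a \<noteq> b" and ka: "k \<noteq> a" and kb: "k \<noteq> b"
  shows "cc k a r = e b a * cc k b r"
proof -
  have "\<rho> (wm 1 1 a b ** elt r k a) = \<rho> (elt (-r) k b ** wm 1 1 a b)" using Rrow[OF ab ka kb, of r] by (rule arg_cong)
  then have eq: "wm (e a b) (e b a) a b ** elt (cc k a r) k a = elt (cc k b (-r)) k b ** wm (e a b) (e b a) a b"
    using ab ka kb by (simp add: rmult wm_SL elt_SL rho_wm rho_elt)
  have "(wm (e a b) (e b a) a b ** elt (cc k a r) k a) $ k $ a = (elt (cc k b (-r)) k b ** wm (e a b) (e b a) a b) $ k $ a"
    using eq by simp
  then show ?thesis using ab ka kb e_inv[OF ab] by (simp add: elt_mr elt_ml wm_entry cc_neg mult.commute)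
qed

end

context liftctx
begin

lemma cocyc: "a \<noteq> b \<Longrightarrow> k \<noteq> a \<Longrightarrow> k \<noteq> b \<Longrightarrow> e a k = e a b * e b k"
  by (rule col)

lemma psi_col:
  assumes ab: "a \<noteq> b" and ka: "k \<noteq> a" and kb: "k \<noteq> b"
  shows "psi a k r = psi b k r"
proof -
  have c: "e k b = e k a * e a b" using cocyc[of k a b] ab ka kb by simp
  have "psi a k r = e a b * cc b k r * e k a" unfolding psi_def using col[OF ab ka kb] by simp
  also have "\<dots> = cc b k r * (e k a * e a b)" by (simp add: algebra_simps)
  also have "\<dots> = psi b k r" unfolding psi_def c ..
  finally show ?thesis .
qed

lemma psi_row:
  assumes ab: "a \<noteq> b" and ka: "k \<noteq> a" and kb: "k \<noteq> b"
  shows "psi k a r = psi k b r"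
proof -
  have c: "e b k = e b a * e a k" using cocyc[of b a k] ab ka kb by simp
  have "psi k a r = e b a * cc k b r * e a k" unfolding psi_def using row[OF ab ka kb] by simp
  also have "\<dots> = cc k b r * (e b a * e a k)" by (simp add: algebra_simps)
  also have "\<dots> = psi k b r" unfolding psi_def c ..
  finally show ?thesis .
qed

lemma psi_add: "a \<noteq> b \<Longrightarrow> psi a b (r + s) = psi a b r + psi a b s"
  unfolding psi_def by (simp add: cc_add distrib_right)

lemma ext_units:
  fixes \<phi>1 \<phi>2 :: "'r \<Rightarrow> 's"
  assumes a1: "\<And>x y. \<phi>1 (x + y) = \<phi>1 x + \<phi>1 y" and a2: "\<And>x y. \<phi>2 (x + y) = \<phi>2 x + \<phi>2 y"
    and u: "\<And>u u'. u * u' = 1 \<Longrightarrow> \<phi>1 u = \<phi>2 u"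
  shows "\<phi>1 x = \<phi>2 x"
proof (cases "\<pi>R x = 0")
  case False
  then obtain y where "x * y = 1" using locRR by blast
  then show ?thesis using u by blast
next
  case True
  then have "\<pi>R (x + 1) \<noteq> 0" by (simp add: rh_add[OF homR] rh_1[OF homR])
  then obtain y where "(x + 1) * y = 1" using locRR by blast
  then have "\<phi>1 (x + 1) = \<phi>2 (x + 1)" using u by blast
  moreover have "\<phi>1 1 = \<phi>2 1" using u[of 1 1] by simp
  ultimately show ?thesis using a1[of x 1] a2[of x 1] by simp
qed

lemma psi_one: "a \<noteq> b \<Longrightarrow> psi a b 1 = 1"
  unfolding psi_def by (rule e_inv)

lemma psi_swap:
  assumes ab: "a \<noteq> b"
  shows "psi a b r = psi b a r"
proof (rule ext_units[of "psi a b" "psi b a"])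
  show "psi a b (x + y) = psi a b x + psi a b y" for x y by (rule psi_add[OF ab])
  show "psi b a (x + y) = psi b a x + psi b a y" for x y using ab by (simp add: psi_add)
  fix u u' :: 'r assume u: "u * u' = 1"
  have u2: "u' * u = 1" using u by (simp add: mult.commute)
  have i1: "psi a b u * psi b a u' = 1"
  proof -
    have "psi a b u * psi b a u' = (cc a b u * cc b a u') * (e b a * e a b)"
      unfolding psi_def by (simp add: algebra_simps)
    then show ?thesis using cc_inv[OF ab u] e_inv[OF ab[symmetric]] by simp
  qed
  have i2: "psi b a u' * psi b a u = 1"
    using psi_mult_units[OF ab[symmetric] u2 u] psi_one[OF ab[symmetric]] u2 by simp
  have "psi a b u = psi a b u * (psi b a u' * psi b a u)" using i2 by simp
  also have "\<dots> = (psi a b u * psi b a u') * psi b a u" by (simp add: mult.assoc)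
  also have "\<dots> = psi b a u" using i1 by simp
  finally show "psi a b u = psi b a u" .
qed

lemma psi_all:
  assumes ab: "a \<noteq> b" and ab': "a' \<noteq> b'"
  shows "psi a b r = psi a' b' r"
proof (cases "a' = b")
  case False
  have 1: "psi a b r = psi a' b r"
    using psi_col[of a a' b r] False ab by (cases "a = a'") auto
  have 2: "psi a' b r = psi a' b' r"
    using psi_row[of b b' a' r] False ab' by (cases "b = b'") auto
  show ?thesis using 1 2 by simp
next
  case True
  show ?thesis
  proof (cases "b' = a")
    case True
    then show ?thesis using psi_swap[OF ab] \<open>a' = b\<close> by simp
  next
    case False
    have 1: "psi a b r = psi a b' r"
      using psi_row[of b b' a r] False ab ab' True by (cases "b = b'") auto
    have 2: "psi a b' r = psi a' b' r"
      using psi_col[of a a' b' r] False ab ab' True by auto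
    show ?thesis using 1 2 by simp
  qed
qed

end

context liftctx
begin

lemma locR_R: "locR \<pi>R"
  by (unfold_locales) (auto simp: homR locRR)

lemma f_mult:
  assumes ab: "a \<noteq> b"
  shows "psi a b (x * y) = psi a b x * psi a b y"
proof -
  have A: "psi a b (z * u) = psi a b z * psi a b u" if u: "u * u' = 1" for z u u'
  proof (rule ext_units[of "\<lambda>z. psi a b (z * u)" "\<lambda>z. psi a b z * psi a b u"])
    show "psi a b ((x + y) * u) = psi a b (x * u) + psi a b (y * u)" for x y
      using psi_add[OF ab] by (simp add: distrib_right)
    show "psi a b (x + y) * psi a b u = psi a b x * psi a b u + psi a b y * psi a b u" for x y
      using psi_add[OF ab] by (simp add: distrib_right)
    fix v v' :: 'r assume "v * v' = 1"
    then show "psi a b (v * u) = psi a b v * psi a b u" using psi_mult_units[OF ab _ u] by blast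
  qed
  show ?thesis
  proof (rule ext_units[of "\<lambda>y. psi a b (x * y)" "\<lambda>y. psi a b x * psi a b y"])
    show "psi a b (x * (y + z)) = psi a b (x * y) + psi a b (x * z)" for y z
      using psi_add[OF ab] by (simp add: distrib_left)
    show "psi a b x * psi a b (y + z) = psi a b x * psi a b y + psi a b x * psi a b z" for y z
      using psi_add[OF ab] by (simp add: distrib_left)
    fix u u' :: 'r assume "u * u' = 1"
    then show "psi a b (x * u) = psi a b x * psi a b u" by (rule A)
  qed
qed

lemma f_hom: "a \<noteq> b \<Longrightarrow> is_ring_hom (psi a b)"
  unfolding is_ring_hom_def using psi_one psi_add f_mult by blast

lemma f_red: "a \<noteq> b \<Longrightarrow> \<pi>S (psi a b x) = \<pi>R x"
  unfolding psi_def using cc_red[of a b x] cc_red[of b a 1] by (simp add: rh_mult[OF homS] rh_1[OF homR])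


lemma cc_f: "a \<noteq> b \<Longrightarrow> a0 \<noteq> b0 \<Longrightarrow> cc a b r = e a b * psi a0 b0 r"
proof -
  assume ab: "a \<noteq> b" and ab0: "a0 \<noteq> b0"
  have "psi a0 b0 r = psi a b r" using psi_all[OF ab0 ab] .
  then have "e a b * psi a0 b0 r = cc a b r * (e a b * e b a)" unfolding psi_def by (simp add: algebra_simps)
  then show ?thesis using e_inv[OF ab] by simp
qed

definition Dv :: "'n \<Rightarrow> 'n \<Rightarrow> 's" where "Dv a0 x = (if x = a0 then 1 else e x a0)"
definition Dw :: "'n \<Rightarrow> 'n \<Rightarrow> 's" where "Dw a0 x = (if x = a0 then 1 else e a0 x)"

lemma e_D: "a \<noteq> b \<Longrightarrow> e a b = Dv a0 a * Dw a0 b"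
proof -
  assume ab: "a \<noteq> b"
  show ?thesis
  proof (cases "a = a0")
    case True then show ?thesis using ab by (simp add: Dv_def Dw_def)
  next
    case False
    show ?thesis
    proof (cases "b = a0")
      case True then show ?thesis using ab False by (simp add: Dv_def Dw_def)
    next
      case False2: False
      then show ?thesis using cocyc[of a a0 b] ab False by (simp add: Dv_def Dw_def)
    qed
  qed
qed

lemma D_inv: "Dv a0 x * Dw a0 x = 1"
  unfolding Dv_def Dw_def using e_inv[of x a0] by auto

lemma D_inv2: "Dw a0 x * Dv a0 x = 1"
  using D_inv[of a0 x] by (simp add: mult.commute)

lemma PQ1: "dg (Dv a0) ** dg (Dw a0) = mat 1"
  unfolding dg_dg D_inv by (simp add: dg_def mat_def)

lemma PQ2: "dg (Dw a0) ** dg (Dv a0) = mat 1"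
  unfolding dg_dg D_inv2 by (simp add: dg_def mat_def)

lemma P_red: "matmap \<pi>S (dg (Dv a0)) = mat 1"
  using cc_red[of _ a0 1] by (auto simp: vec_eq_iff dg_def mat_def Dv_def rh_1[OF homS] rh_1[OF homR] rh_0[OF homS])

lemma conj_entry: "(dg d ** X ** dg d') $ x $ y = d x * X $ x $ y * d' y"
  by (simp add: dg_ml dg_mr)

lemma rho_elt_conj:
  assumes ab: "a \<noteq> b" and ab0: "a0 \<noteq> b0"
  shows "\<rho> (elt r a b) = dg (Dv a0) ** matmap (psi a0 b0) (elt r a b) ** dg (Dw a0)"
proof -
  have "elt (cc a b r) a b $ x $ y = (dg (Dv a0) ** elt (psi a0 b0 r) a b ** dg (Dw a0)) $ x $ y" for x y
    unfolding conj_entry using ab D_inv[of a0 x] cc_f[OF ab ab0, of r] e_D[OF ab, of a0]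
    by (auto simp: elt_entry algebra_simps)
  then show ?thesis using ab f_hom[OF ab0] by (simp add: rho_elt matmap_elt vec_eq_iff)
qed

lemma rho_one: "(a0::'n) \<noteq> b0 \<Longrightarrow> \<rho> (mat 1) = mat 1"
  using rho_elt[of a0 b0 0] cc_0[of a0 b0] by (simp add: elt_0)

lemma rho_Eg:
  assumes ab0: "a0 \<noteq> b0"
  shows "A \<in> Eg \<Longrightarrow> \<rho> A = dg (Dv a0) ** matmap (psi a0 b0) A ** dg (Dw a0)"
proof (induction A rule: Eg.induct)
  case Eg1
  then show ?case using rho_one[OF ab0] PQ1[of a0] by (simp add: matmap_one[OF f_hom[OF ab0]])
next
  case (Eg2 a b A r)
  let ?P = "dg (Dv a0)" and ?Q = "dg (Dw a0)" and ?f = "psi a0 b0"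
  have "\<rho> (elt r a b ** A) = \<rho> (elt r a b) ** \<rho> A"
    using Eg2 by (simp add: rmult elt_SL Eg_SL)
  also have "\<dots> = (?P ** matmap ?f (elt r a b) ** ?Q) ** (?P ** matmap ?f A ** ?Q)"
    using Eg2 rho_elt_conj[OF Eg2(1) ab0] by simp
  also have "\<dots> = ?P ** matmap ?f (elt r a b) ** (?Q ** ?P) ** matmap ?f A ** ?Q"
    by (simp add: matrix_mul_assoc)
  also have "\<dots> = ?P ** matmap ?f (elt r a b ** A) ** ?Q"
    by (simp add: PQ2 matmap_mult[OF f_hom[OF ab0]] matrix_mul_assoc)
  finally show ?case .
qed

lemma rho_SL: "a0 \<noteq> b0 \<Longrightarrow> g \<in> SL \<Longrightarrow> \<rho> g = dg (Dv a0) ** matmap (psi a0 b0) g ** dg (Dw a0)"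
  using rho_Eg[of a0 b0 g] locR.gen[OF locR_R, of g] by (simp add: SL_def)

lemma se_final: "a0 \<noteq> b0 \<Longrightarrow> strict_equiv \<pi>S (\<lambda>g. matmap (psi a0 b0) g) \<rho>"
  unfolding se_iff[OF homS] using PQ1 PQ2 P_red rho_SL by blast

end

lemma cobj_loc0: "cobj \<pi> \<Longrightarrow> \<forall>x. \<pi> x \<noteq> 0 \<longrightarrow> (\<exists>y. x * y = 1)"
  unfolding cobj_def by (rule conjunct1[OF conjunct2[OF conjunct2]])

lemma cobj_loc: "cobj \<pi> \<Longrightarrow> \<pi> x \<noteq> 0 \<Longrightarrow> \<exists>y. x * y = 1"
  using cobj_loc0 by blast

lemma homC_D:
  assumes "f \<in> homC \<pi>R \<pi>S"
  shows "is_ring_hom f" "\<And>x. x \<in> maxid \<pi>R \<Longrightarrow> f x \<in> maxid \<pi>S" "\<And>x. \<pi>S (f x) = \<pi>R x"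
  using assms unfolding homC_def by auto

lemma SL_inv:
  assumes R: "cobj (\<pi>R :: 'r::comm_ring_1 \<Rightarrow> 'k::{field,finite})" and g: "(g::'r^'n^'n) \<in> SL"
  shows "\<exists>B. g ** B = mat 1 \<and> B ** g = mat 1"
proof -
  have "locR \<pi>R" by unfold_locales (auto simp: cobj_rh[OF R] cobj_loc[OF R])
  then have "g \<in> Eg" using g locR.gen by (auto simp: SL_def)
  then show ?thesis using Eg_inv by blast
qed

lemma matmap_lift:
  fixes \<pi>R :: "'r::comm_ring_1 \<Rightarrow> 'k::{field,finite}" and \<pi>S :: "'s::comm_ring_1 \<Rightarrow> 'k"
  assumes R: "cobj \<pi>R" and f: "f \<in> homC \<pi>R \<pi>S"
  shows "is_lift \<pi>R \<pi>S (\<lambda>g::'r^'n^'n. matmap f g)"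
  unfolding is_lift_def
proof (intro conjI ballI allI)
  have fh: "is_ring_hom f" by (rule homC_D(1)[OF f])
  fix g :: "'r^'n^'n" assume g: "g \<in> SL"
  obtain B where B: "g ** B = mat 1" "B ** g = mat 1" using SL_inv[OF R g] by blast
  show "is_GL (matmap f g)" unfolding is_GL_def
    using B by (intro exI[of _ "matmap f B"]) (simp add: matmap_mult[OF fh, symmetric] matmap_one[OF fh])
  show "matmap \<pi>S (matmap f g) = matmap \<pi>R g" by (simp add: vec_eq_iff homC_D(3)[OF f])
  fix i
  show "\<exists>j. \<forall>h\<in>SL. matcong \<pi>R j g h \<longrightarrow> matcong \<pi>S i (matmap f g) (matmap f h)"
  proof (intro exI[of _ i] ballI impI)
    fix h :: "'r^'n^'n" assume "matcong \<pi>R i g h"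
    moreover have sub: "f ` mpow \<pi>R i \<subseteq> mpow \<pi>S i" by (rule hom_mpow[OF fh homC_D(2)[OF f]])
    ultimately have "\<forall>a b. f (g$a$b - h$a$b) \<in> mpow \<pi>S i"
      unfolding matcong_def by (intro allI subsetD[OF sub] imageI) simp
    then show "matcong \<pi>S i (matmap f g) (matmap f h)"
      unfolding matcong_def by (simp add: rh_diff[OF fh])
  next
  qed
next
  fix g h :: "'r^'n^'n"
  show "matmap f (g ** h) = matmap f g ** matmap f h" by (rule matmap_mult[OF homC_D(1)[OF f]])
qed

lemma conj_elt_entry:
  fixes P Q :: "'a::comm_ring_1^'n^'n"
  shows "(P ** elt x a b ** Q) $ i $ j = (P ** Q)$i$j + P$i$a * x * Q$b$j"
proof -
  have "(P ** elt x a b ** Q) $ i $ j = (\<Sum>l\<in>UNIV. P$i$l * Q$l$j + (if l = b then P$i$a * x * Q$l$j else 0))"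
    unfolding matrix_matrix_mult_def[of "P ** elt x a b" Q] by (auto simp: elt_mr algebra_simps intro!: sum.cong)
  also have "\<dots> = (P ** Q)$i$j + P$i$a * x * Q$b$j"
    by (simp add: sum.distrib matrix_matrix_mult_def)
  finally show ?thesis .
qed

lemma two_elems:
  assumes "CARD('n::finite) \<ge> 2"
  obtains a0 b0 :: "'n::finite" where "a0 \<noteq> b0"
proof -
  fix a0 :: 'n
  have "card (UNIV - {a0}) = CARD('n) - 1" by (simp add: card_Diff_singleton)
  then have c: "card (UNIV - {a0}) \<noteq> 0" using assms by simp
  have "UNIV - {a0} \<noteq> {}"
  proof
    assume "UNIV - {a0} = {}"
    then have "card (UNIV - {a0}) = 0" by (simp only: card.empty)
    with c show False by simp
  qed
  then obtain b0 where "b0 \<in> UNIV - {a0}" by blast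
  then have "a0 \<noteq> b0" by simp
  then show ?thesis by (rule that)
qed

lemma Def_elem:
  assumes "\<xi> \<in> Def \<pi>R \<pi>S"
  obtains \<rho>0 where "is_lift \<pi>R \<pi>S \<rho>0" "\<And>\<rho>'. \<rho>' \<in> \<xi> \<longleftrightarrow> strict_equiv \<pi>S \<rho>0 \<rho>'"
proof -
  from assms obtain \<rho>0 where "\<xi> = {(\<rho>, \<rho>'). strict_equiv \<pi>S \<rho> \<rho>'} `` {\<rho>0}" "\<rho>0 \<in> {\<rho>. is_lift \<pi>R \<pi>S \<rho>}"
    unfolding Def_def by (rule quotientE)
  then show ?thesis using that[of \<rho>0] by auto
qed

lemma lift_mult: "is_lift \<pi>R \<pi>S \<rho> \<Longrightarrow> g \<in> SL \<Longrightarrow> h \<in> SL \<Longrightarrow> \<rho> (g ** h) = \<rho> g ** \<rho> h"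
  by (simp add: is_lift_def)

lemma lift_red: "is_lift \<pi>R \<pi>S \<rho> \<Longrightarrow> g \<in> SL \<Longrightarrow> matmap \<pi>S (\<rho> g) = matmap \<pi>R g"
  by (simp add: is_lift_def)

theorem mainTheorem11:
  fixes \<pi>R :: "'r::comm_ring_1 \<Rightarrow> 'k::{field,finite}"
    and \<pi>S :: "'s::comm_ring_1 \<Rightarrow> 'k"
  assumes "cobj \<pi>R" and "cobj \<pi>S" and "CARD('n::finite) \<ge> 2"
  shows "inj_on (iota_star \<pi>R \<pi>S :: ('r \<Rightarrow> 's) \<Rightarrow> ('r^'n^'n \<Rightarrow> 's^'n^'n) set) (homC \<pi>R \<pi>S)
     \<and> (\<forall>\<xi> \<in> (Def \<pi>R \<pi>S :: ('r^'n^'n \<Rightarrow> 's^'n^'n) set set).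
          \<xi> \<in> iota_star \<pi>R \<pi>S ` homC \<pi>R \<pi>S \<longleftrightarrow>
          (\<exists>\<rho>\<in>\<xi>. \<forall>a b. a \<noteq> b \<longrightarrow> (\<forall>r. \<exists>c. \<rho> (elt r a b) = elt c a b)))"
proof -
  have hR: "is_ring_hom \<pi>R" by (rule cobj_rh[OF assms(1)])
  have hS: "is_ring_hom \<pi>S" by (rule cobj_rh[OF assms(2)])
  obtain a0 b0 :: 'n where ab0: "a0 \<noteq> b0" using two_elems[OF assms(3)] by blast
  have eltSL: "elt r a b \<in> SL" if "a \<noteq> b" for r :: 'r and a b :: 'n
    using that by (simp add: SL_def det_elt)
  have mem_iota: "(\<lambda>g. matmap f g) \<in> (iota_star \<pi>R \<pi>S f :: ('r^'n^'n \<Rightarrow> 's^'n^'n) set)"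
    if f: "f \<in> homC \<pi>R \<pi>S" for f
    unfolding iota_star_def using matmap_lift[OF assms(1) f] by (simp add: se_refl[OF hS])
  have part1: "inj_on (iota_star \<pi>R \<pi>S :: ('r \<Rightarrow> 's) \<Rightarrow> ('r^'n^'n \<Rightarrow> 's^'n^'n) set) (homC \<pi>R \<pi>S)"
    unfolding inj_on_def
  proof (intro ballI impI)
    fix f g assume f: "f \<in> homC \<pi>R \<pi>S" and g: "g \<in> homC \<pi>R \<pi>S"
      and eq: "(iota_star \<pi>R \<pi>S f :: ('r^'n^'n \<Rightarrow> 's^'n^'n) set) = iota_star \<pi>R \<pi>S g"
    have "(\<lambda>h. matmap g h) \<in> (iota_star \<pi>R \<pi>S f :: ('r^'n^'n \<Rightarrow> 's^'n^'n) set)"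
      using mem_iota[OF g] eq by simp
    then have "strict_equiv \<pi>S (\<lambda>h. matmap f h) (\<lambda>h::'r^'n^'n. matmap g h)"
      unfolding iota_star_def by simp
    then obtain P Q :: "'s^'n^'n" where PQ: "P ** Q = mat 1" "\<forall>h\<in>SL. matmap g h = P ** matmap f h ** Q"
      unfolding se_iff[OF hS] by blast
    have fh: "is_ring_hom f" and gh: "is_ring_hom g" using homC_D(1) f g by blast+
    have key: "g r = P$a0$a0 * f r * Q$b0$b0" for r
    proof -
      have "elt (g r) a0 b0 = P ** elt (f r) a0 b0 ** Q"
        using PQ(2)[rule_format, OF eltSL[OF ab0, of r]] by (simp add: matmap_elt fh gh)
      then have "elt (g r) a0 b0 $ a0 $ b0 = (P ** elt (f r) a0 b0 ** Q) $ a0 $ b0" by simp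
      then show ?thesis using ab0 PQ(1) by (simp add: conj_elt_entry elt_entry mat_def)
    qed
    have one: "P$a0$a0 * Q$b0$b0 = 1" using key[of 1] rh_1[OF fh] rh_1[OF gh] by simp
    show "f = g"
    proof
      fix r show "f r = g r" using key[of r] one by (simp add: algebra_simps)
    qed
  qed
  have part2: "\<xi> \<in> iota_star \<pi>R \<pi>S ` homC \<pi>R \<pi>S \<longleftrightarrow>
          (\<exists>\<rho>\<in>\<xi>. \<forall>a b. a \<noteq> b \<longrightarrow> (\<forall>r. \<exists>c. \<rho> (elt r a b) = elt c a b))"
    if xi: "\<xi> \<in> (Def \<pi>R \<pi>S :: ('r^'n^'n \<Rightarrow> 's^'n^'n) set set)" for \<xi>
  proof
    assume "\<xi> \<in> iota_star \<pi>R \<pi>S ` homC \<pi>R \<pi>S"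
    then obtain f where f: "f \<in> homC \<pi>R \<pi>S" and xf: "\<xi> = iota_star \<pi>R \<pi>S f" by blast
    have fh: "is_ring_hom f" using homC_D(1) f by blast
    show "\<exists>\<rho>\<in>\<xi>. \<forall>a b. a \<noteq> b \<longrightarrow> (\<forall>r. \<exists>c. \<rho> (elt r a b) = elt c a b)"
      using mem_iota[OF f] xf by (intro bexI[of _ "\<lambda>g. matmap f g"]) (auto simp: matmap_elt[OF fh])
  next
    assume "\<exists>\<rho>\<in>\<xi>. \<forall>a b. a \<noteq> b \<longrightarrow> (\<forall>r. \<exists>c. \<rho> (elt r a b) = elt c a b)"
    then obtain \<rho> where r: "\<rho> \<in> \<xi>" and Hy: "\<And>a b r. a \<noteq> b \<Longrightarrow> \<exists>c. \<rho> (elt r a b) = elt c a b" by blast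
    obtain \<rho>0 where l0: "is_lift \<pi>R \<pi>S \<rho>0" and mem: "\<And>\<rho>'. \<rho>' \<in> \<xi> \<longleftrightarrow> strict_equiv \<pi>S \<rho>0 \<rho>'"
      using Def_elem[OF xi] by blast
    have s0: "strict_equiv \<pi>S \<rho>0 \<rho>" using mem[THEN iffD1, OF r] .
    have l: "is_lift \<pi>R \<pi>S \<rho>" by (rule lift_conj[OF hS l0 s0])
    interpret LC: liftctx \<pi>R \<pi>S \<rho>
    proof
      show "is_ring_hom \<pi>R" by (rule hR)
      show "is_ring_hom \<pi>S" by (rule hS)
      show "\<exists>y. x * y = 1" if "\<pi>R x \<noteq> 0" for x using cobj_loc[OF assms(1) that] .
      show "\<exists>y. x * y = 1" if "\<pi>S x \<noteq> 0" for x using cobj_loc[OF assms(2) that] .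
      show "\<rho> (g ** h) = \<rho> g ** \<rho> h" if "g \<in> SL" "h \<in> SL" for g h by (rule lift_mult[OF l that])
      show "matmap \<pi>S (\<rho> g) = matmap \<pi>R g" if "g \<in> SL" for g by (rule lift_red[OF l that])
      show "\<exists>c. \<rho> (elt r a b) = elt c a b" if "a \<noteq> b" for a b r by (rule Hy[OF that])
    qed
    define f where "f = LC.psi a0 b0"
    have fh: "is_ring_hom f" unfolding f_def by (rule LC.f_hom[OF ab0])
    have fr: "\<pi>S (f x) = \<pi>R x" for x unfolding f_def by (rule LC.f_red[OF ab0])
    have fC: "f \<in> homC \<pi>R \<pi>S" unfolding homC_def maxid_def using fh fr by simp
    have sf: "strict_equiv \<pi>S (\<lambda>g. matmap f g) \<rho>" unfolding f_def by (rule LC.se_final[OF ab0])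
    have "\<xi> = iota_star \<pi>R \<pi>S f"
    proof (rule set_eqI)
      fix \<rho>'
      show "\<rho>' \<in> \<xi> \<longleftrightarrow> \<rho>' \<in> iota_star \<pi>R \<pi>S f"
      proof
        assume "\<rho>' \<in> \<xi>"
        then have s1: "strict_equiv \<pi>S \<rho>0 \<rho>'" by (rule mem[THEN iffD1])
        have "is_lift \<pi>R \<pi>S \<rho>'" by (rule lift_conj[OF hS l0 s1])
        moreover have "strict_equiv \<pi>S (\<lambda>g. matmap f g) \<rho>'"
          by (rule se_trans[OF hS sf se_trans[OF hS se_sym[OF hS s0] s1]])
        ultimately show "\<rho>' \<in> iota_star \<pi>R \<pi>S f" unfolding iota_star_def by simp
      next
        assume "\<rho>' \<in> iota_star \<pi>R \<pi>S f"
        then have s2: "strict_equiv \<pi>S (\<lambda>g. matmap f g) \<rho>'" unfolding iota_star_def by simp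
        have "strict_equiv \<pi>S \<rho>0 \<rho>'"
          by (rule se_trans[OF hS s0 se_trans[OF hS se_sym[OF hS sf] s2]])
        then show "\<rho>' \<in> \<xi>" by (rule mem[THEN iffD2])
      qed
    qed
    then show "\<xi> \<in> iota_star \<pi>R \<pi>S ` homC \<pi>R \<pi>S" using fC by (rule image_eqI)
  qed
  show ?thesis
  proof (intro conjI ballI)
    show "inj_on (iota_star \<pi>R \<pi>S :: ('r \<Rightarrow> 's) \<Rightarrow> ('r^'n^'n \<Rightarrow> 's^'n^'n) set) (homC \<pi>R \<pi>S)"
      by (rule part1)
    fix \<xi> :: "('r^'n^'n \<Rightarrow> 's^'n^'n) set" assume "\<xi> \<in> Def \<pi>R \<pi>S"
    then show "\<xi> \<in> iota_star \<pi>R \<pi>S ` homC \<pi>R \<pi>S \<longleftrightarrow>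
          (\<exists>\<rho>\<in>\<xi>. \<forall>a b. a \<noteq> b \<longrightarrow> (\<forall>r. \<exists>c. \<rho> (elt r a b) = elt c a b))" by (rule part2)
  qed
qed

end
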